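(* For every $s>0$ there are constants $c,C>0$ such that for every locally constant function $f:\mathbb{Z}_2\to\mathbb{C}$, $$c\,N_s(f)\le \|f\|_{H^s(\mathbb{Z}_2)}\le C\,N_s(f),\qquad N_s(f)=\|f\|_{L^2(\mathbb{Z}_2)}+\left(\int_{\mathbb{Z}_2}\int_{\mathbb{Z}_2}\frac{|f(x)-f(y)|^2}{|x-y|_2^{1+2s}}\,d\mu(x)\,d\mu(y)\right)^{1/2}.$$
   Context: $\mathbb{Z}_2$ is the ring of 2-adic integers with 2-adic absolute value $|\cdot|_2$ and Haar probability measure $\mu$. $\Lambda=\mathbb{Q}_2/\mathbb{Z}_2$; $\mathcal F(f)(\lambda)=\int_{\mathbb{Z}_2}e^{-2i\pi\lambda x}f(x)\,d\mu(x)$; $\|f\|_{H^s(\mathbb{Z}_2)}=\big(\sum_{\lambda\in\Lambda}(1+|\lambda|_2)^{2s}|\mathcal F(f)(\lambda)|^2\big)^{1/2}$. *)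

theory Defs
  imports "HOL-Probability.Probability"
begin

text \<open>Model: a 2-adic integer x = sum_i x_i 2^i is represented by its digit
  sequence, a function nat \<Rightarrow> bool.  This is a homeomorphism of Z_2 onto the
  Cantor space, and the Haar probability measure corresponds to the infinite
  product of fair Bernoulli measures on the digits.\<close>

type_synonym Z2 = "nat \<Rightarrow> bool"

definition haar2 :: "Z2 measure" where
  "haar2 = (\<Pi>\<^sub>M i\<in>(UNIV::nat set). measure_pmf (bernoulli_pmf (1/2)))"

text \<open>x mod 2^n as a natural number.\<close>
definition trunc2 :: "nat \<Rightarrow> Z2 \<Rightarrow> nat" where
  "trunc2 n x = (\<Sum>i<n. if x i then 2 ^ i else 0)"

text \<open>|x - y|_2 = 2^(-v) with v the 2-adic valuation of x - y, i.e. the first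
  digit where x and y differ; 0 if x = y.\<close>
definition abs2_diff :: "Z2 \<Rightarrow> Z2 \<Rightarrow> real" where
  "abs2_diff x y = (if x = y then 0 else 2 powr (- real (LEAST i. x i \<noteq> y i)))"

text \<open>Locally constant: every point has a ball (x + 2^n Z_2) on which f is constant.\<close>
definition locally_constant2 :: "(Z2 \<Rightarrow> 'b) \<Rightarrow> bool" where
  "locally_constant2 f \<longleftrightarrow> (\<forall>x. \<exists>n. \<forall>y. (\<forall>i<n. y i = x i) \<longrightarrow> f y = f x)"

text \<open>The dual group Lambda = Q_2/Z_2: its elements are a/2^n with n = 0, a = 0,
  or n \<ge> 1 and a odd, 0 < a < 2^n; encoded as the pair (n,a). Then |a/2^n|_2 = 2^n
  and (a/2^n) x = a (x mod 2^n) / 2^n modulo 1.\<close>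
definition Lambda2 :: "(nat \<times> nat) set" where
  "Lambda2 = {(n, a). (n = 0 \<and> a = 0) \<or> (1 \<le> n \<and> odd a \<and> a < 2 ^ n)}"

definition lam_abs2 :: "nat \<times> nat \<Rightarrow> real" where
  "lam_abs2 l = (if fst l = 0 then 0 else 2 ^ fst l)"

definition fourier2 :: "(Z2 \<Rightarrow> complex) \<Rightarrow> nat \<times> nat \<Rightarrow> complex" where
  "fourier2 f l = (LINT x|haar2. exp (- 2 * pi * \<i> *
      of_real (real (snd l) * real (trunc2 (fst l) x) / 2 ^ fst l)) * f x)"

definition Hs_norm2 :: "real \<Rightarrow> (Z2 \<Rightarrow> complex) \<Rightarrow> real" where
  "Hs_norm2 s f = sqrt (\<Sum>\<^sub>\<infinity>l\<in>Lambda2. (1 + lam_abs2 l) powr (2 * s) * (cmod (fourier2 f l))\<^sup>2)"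

definition L2_norm2 :: "(Z2 \<Rightarrow> complex) \<Rightarrow> real" where
  "L2_norm2 f = sqrt (LINT x|haar2. (cmod (f x))\<^sup>2)"

definition Ns2 :: "real \<Rightarrow> (Z2 \<Rightarrow> complex) \<Rightarrow> real" where
  "Ns2 s f = L2_norm2 f + sqrt (LINT x|haar2. LINT y|haar2.
       (cmod (f x - f y))\<^sup>2 / abs2_diff x y powr (1 + 2 * s))"

end

theory Submission
  imports Defs
begin


definition decode2 :: "nat \<Rightarrow> Z2" where "decode2 j = (\<lambda>i. odd (j div 2 ^ i))"

lemma trunc2_Suc: "trunc2 (Suc n) x = trunc2 n x + (if x n then 2 ^ n else 0)"
  by (simp add: trunc2_def)

lemma trunc2_less: "trunc2 n x < 2 ^ n"
proof (induction n)
  case 0 then show ?case by (simp add: trunc2_def)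
next
  case (Suc n) then show ?case by (simp add: trunc2_Suc)
qed

lemma trunc2_decode_bit: "i < n \<Longrightarrow> decode2 (trunc2 n x) i = x i"
proof (induction n)
  case 0 then show ?case by simp
next
  case (Suc n)
  show ?case
  proof (cases "i = n")
    case True
    have "trunc2 (Suc n) x div 2 ^ n = (if x n then 1 else 0)"
      using trunc2_less[of n x] by (auto simp: trunc2_Suc)
    then show ?thesis using True by (simp add: decode2_def)
  next
    case False
    then have i: "i < n" using Suc by simp
    define c where "c = (if x n then 2 ^ (n - i) else (0::nat))"
    have c: "even c" using i by (simp add: c_def)
    have "trunc2 (Suc n) x = trunc2 n x + c * 2 ^ i"
      using i by (simp add: trunc2_Suc c_def power_add[symmetric])
    then have "trunc2 (Suc n) x div 2 ^ i = c + trunc2 n x div 2 ^ i"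
      by simp
    then show ?thesis using Suc.IH[OF i] c by (simp add: decode2_def)
  qed
qed

lemma trunc2_cong: "(\<And>i. i < n \<Longrightarrow> x i = y i) \<Longrightarrow> trunc2 n x = trunc2 n y"
  by (simp add: trunc2_def)

lemma trunc2_eq_iff: "trunc2 n x = trunc2 n y \<longleftrightarrow> (\<forall>i<n. x i = y i)"
  by (metis trunc2_cong trunc2_decode_bit)

lemma trunc2_decode: "j < 2 ^ n \<Longrightarrow> trunc2 n (decode2 j) = j"
proof (induction n arbitrary: j)
  case 0 then show ?case by (simp add: trunc2_def)
next
  case (Suc n)
  have "trunc2 n (decode2 j) = trunc2 n (decode2 (j mod 2 ^ n))"
  proof (rule trunc2_cong)
    fix i assume "i < n"
    then show "decode2 j i = decode2 (j mod 2 ^ n) i"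
      by (simp add: decode2_def bit_nat_def[symmetric] take_bit_eq_mod[symmetric] bit_take_bit_iff)
  qed
  also have "\<dots> = j mod 2 ^ n" by (rule Suc.IH) simp
  finally have 1: "trunc2 n (decode2 j) = j mod 2 ^ n" .
  have "j div 2 ^ n < 2" using Suc.prems by (simp add: less_mult_imp_div_less)
  then have "j div 2 ^ n = 0 \<or> j div 2 ^ n = 1" by linarith
  then have dj: "decode2 j n = (j div 2 ^ n = 1)" unfolding decode2_def by auto
  show ?case
  proof (cases "decode2 j n")
    case True then have "j div 2^n = 1" using dj by simp
    then have "j = j mod 2^n + 2^n" using div_mult_mod_eq[of j "2^n"] by simp
    then show ?thesis using 1 True by (simp add: trunc2_Suc)
  next
    case False then have "j div 2^n = 0" using dj \<open>j div 2 ^ n = 0 \<or> j div 2 ^ n = 1\<close> by simp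
    then have "j = j mod 2^n" using div_mult_mod_eq[of j "2^n"] by simp
    then show ?thesis using 1 False by (simp add: trunc2_Suc)
  qed
qed
lemma haar2_prob: "prob_space haar2"
  unfolding haar2_def by (rule prob_space_PiM) (simp add: prob_space_measure_pmf)

lemma space_haar2[simp]: "space haar2 = UNIV"
  by (simp add: haar2_def space_PiM)

definition cyl2 :: "nat \<Rightarrow> Z2 \<Rightarrow> Z2 set" where
  "cyl2 k b = {y. \<forall>i<k. y i = b i}"

lemma cyl2_emb: "cyl2 k b = prod_emb UNIV (\<lambda>_. measure_pmf (bernoulli_pmf (1/2))) {..<k} (Pi\<^sub>E {..<k} (\<lambda>i. {b i}))"
  unfolding cyl2_def prod_emb_def space_PiM PiE_UNIV
  by (auto simp: restrict_def PiE_iff extensional_def)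

lemma cyl2_sets[simp]: "cyl2 k b \<in> sets haar2"
  unfolding cyl2_emb haar2_def
  by (rule measurable_prod_emb) (auto intro!: sets_PiM_I_finite)

lemma cyl2_emeasure: "emeasure haar2 (cyl2 k b) = ennreal ((1/2) ^ k)"
proof -
  have "emeasure haar2 (cyl2 k b) = (\<Prod>i\<in>{..<k}. emeasure (measure_pmf (bernoulli_pmf (1/2))) {b i})"
    unfolding cyl2_emb haar2_def
    by (rule emeasure_PiM_emb) (auto simp: prob_space_measure_pmf)
  also have "\<dots> = (\<Prod>i\<in>{..<k}. ennreal (1/2))"
  proof (intro prod.cong refl)
    fix i show "emeasure (measure_pmf (bernoulli_pmf (1/2))) {b i} = ennreal (1/2)"
      by (cases "b i") (simp_all add: emeasure_pmf_single)
  qed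
  also have "\<dots> = ennreal ((1/2) ^ k)" by (simp only: prod_constant card_lessThan) (rule ennreal_power, simp)
  finally show ?thesis .
qed

lemma cyl2_measure: "measure haar2 (cyl2 k b) = (1/2) ^ k"
  using cyl2_emeasure by (simp add: measure_def del: power_one_over)

definition dep2 :: "nat \<Rightarrow> (Z2 \<Rightarrow> 'a) \<Rightarrow> bool" where
  "dep2 M g \<longleftrightarrow> (\<forall>x y. (\<forall>i<M. x i = y i) \<longrightarrow> g x = g y)"

lemma cyl2_mem_iff: "j < 2 ^ M \<Longrightarrow> x \<in> cyl2 M (decode2 j) \<longleftrightarrow> trunc2 M x = j"
  unfolding cyl2_def using trunc2_eq_iff[of M x "decode2 j"] trunc2_decode[of j M] by simp

lemma dep2_decomp:
  fixes g :: "Z2 \<Rightarrow> 'a::real_vector"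
  assumes "dep2 M g"
  shows "g x = (\<Sum>j<2^M. indicator (cyl2 M (decode2 j)) x *\<^sub>R g (decode2 j))"
proof -
  have "(\<Sum>j<2^M. indicator (cyl2 M (decode2 j)) x *\<^sub>R g (decode2 j))
      = (\<Sum>j<2^M. if j = trunc2 M x then g (decode2 j) else 0)"
    by (intro sum.cong refl) (simp add: cyl2_mem_iff indicator_def)
  also have "\<dots> = g (decode2 (trunc2 M x))"
    using trunc2_less[of M x] by (simp add: sum.delta')
  also have "\<dots> = g x"
    using assms unfolding dep2_def by (metis trunc2_decode_bit)
  finally show ?thesis by (rule sym)
qed

lemma cyl2_integrable[simp]: "integrable haar2 (indicator (cyl2 k b) :: Z2 \<Rightarrow> real)"
proof (rule integrable_real_indicator)
  show "cyl2 k b \<in> sets haar2" by (rule cyl2_sets)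
  show "emeasure haar2 (cyl2 k b) < \<infinity>" unfolding cyl2_emeasure by simp
qed

lemma dep2_integrable:
  fixes g :: "Z2 \<Rightarrow> 'a::{banach,second_countable_topology}"
  assumes "dep2 M g"
  shows "integrable haar2 g"
proof -
  have eq: "g = (\<lambda>x. \<Sum>j<2^M. indicator (cyl2 M (decode2 j)) x *\<^sub>R g (decode2 j))"
    by (rule ext, rule dep2_decomp[OF assms])
  show ?thesis
    by (subst eq) (intro Bochner_Integration.integrable_sum integrable_scaleR_left cyl2_integrable)
qed

lemma dep2_integral:
  fixes g :: "Z2 \<Rightarrow> 'a::{banach,second_countable_topology}"
  assumes "dep2 M g"
  shows "integral\<^sup>L haar2 g = (\<Sum>j<2^M. ((1/2)^M) *\<^sub>R g (decode2 j))"
proof -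
  have eq: "g = (\<lambda>x. \<Sum>j<2^M. indicator (cyl2 M (decode2 j)) x *\<^sub>R g (decode2 j))"
    by (rule ext, rule dep2_decomp[OF assms])
  have "integral\<^sup>L haar2 g = integral\<^sup>L haar2 (\<lambda>x. \<Sum>j<2^M. indicator (cyl2 M (decode2 j)) x *\<^sub>R g (decode2 j))"
    by (subst eq) (rule refl)
  also have "\<dots> = (\<Sum>j<2^M. integral\<^sup>L haar2 (\<lambda>x. indicator (cyl2 M (decode2 j)) x *\<^sub>R g (decode2 j)))"
    by (rule Bochner_Integration.integral_sum) (intro integrable_scaleR_left cyl2_integrable)
  also have "\<dots> = (\<Sum>j<2^M. ((1/2)^M) *\<^sub>R g (decode2 j))"
    by (intro sum.cong refl) (simp add: cyl2_measure del: power_one_over)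
  finally show ?thesis .
qed

lemma dep2_mono: "dep2 M g \<Longrightarrow> M \<le> M' \<Longrightarrow> dep2 M' g"
  unfolding dep2_def by auto

lemma dep2_int_inner:
  assumes H: "\<And>y. dep2 M (\<lambda>x. \<Phi> x y)"
  shows "dep2 M (\<lambda>x. integral\<^sup>L haar2 (\<Phi> x))"
  unfolding dep2_def
proof (intro allI impI)
  fix x y :: Z2 assume H2: "\<forall>i<M. x i = y i"
  show "integral\<^sup>L haar2 (\<Phi> x) = integral\<^sup>L haar2 (\<Phi> y)"
    using H H2 unfolding dep2_def by (intro Bochner_Integration.integral_cong[OF refl]) blast
qed

lemma dep2_swap:
  fixes \<Phi> :: "Z2 \<Rightarrow> Z2 \<Rightarrow> 'a::{banach,second_countable_topology}"
  assumes "\<And>y. dep2 M (\<lambda>x. \<Phi> x y)" "\<And>x. dep2 M (\<Phi> x)"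
  shows "(LINT x|haar2. LINT y|haar2. \<Phi> x y) = (LINT y|haar2. LINT x|haar2. \<Phi> x y)"
proof -
  let ?c = "(1/2::real)^M"
  have "(LINT x|haar2. LINT y|haar2. \<Phi> x y) = (\<Sum>i<2^M. ?c *\<^sub>R (\<Sum>j<2^M. ?c *\<^sub>R \<Phi> (decode2 i) (decode2 j)))"
    by (subst dep2_integral[OF dep2_int_inner[OF assms(1)]]) (simp only: dep2_integral[OF assms(2)])
  also have "\<dots> = (\<Sum>i<2^M. \<Sum>j<2^M. ?c *\<^sub>R ?c *\<^sub>R \<Phi> (decode2 i) (decode2 j))"
    by (simp only: scaleR_sum_right)
  also have "\<dots> = (\<Sum>j<2^M. \<Sum>i<2^M. ?c *\<^sub>R ?c *\<^sub>R \<Phi> (decode2 i) (decode2 j))"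
    by (rule sum.swap)
  also have "\<dots> = (\<Sum>j<2^M. ?c *\<^sub>R (\<Sum>i<2^M. ?c *\<^sub>R \<Phi> (decode2 i) (decode2 j)))"
    by (simp only: scaleR_sum_right)
  also have "\<dots> = (LINT y|haar2. LINT x|haar2. \<Phi> x y)"
    by (subst dep2_integral[OF dep2_int_inner[of M "\<lambda>y x. \<Phi> x y", OF assms(2)]]) (simp only: dep2_integral[OF assms(1)])
  finally show ?thesis .
qed

definition good2 :: "(Z2 \<Rightarrow> 'b) \<Rightarrow> nat \<Rightarrow> Z2 \<Rightarrow> bool" where
  "good2 f k x \<longleftrightarrow> (\<exists>n. \<forall>y z. y \<in> cyl2 k x \<longrightarrow> z \<in> cyl2 k x \<longrightarrow> (\<forall>i<n. y i = z i) \<longrightarrow> f y = f z)"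

lemma good2_split:
  assumes "good2 f (Suc k) (x(k:=True))" "good2 f (Suc k) (x(k:=False))"
  shows "good2 f k x"
proof -
  obtain n1 where n1: "\<forall>y z. y \<in> cyl2 (Suc k) (x(k:=True)) \<longrightarrow> z \<in> cyl2 (Suc k) (x(k:=True)) \<longrightarrow> (\<forall>i<n1. y i = z i) \<longrightarrow> f y = f z"
    using assms(1) unfolding good2_def by blast
  obtain n2 where n2: "\<forall>y z. y \<in> cyl2 (Suc k) (x(k:=False)) \<longrightarrow> z \<in> cyl2 (Suc k) (x(k:=False)) \<longrightarrow> (\<forall>i<n2. y i = z i) \<longrightarrow> f y = f z"
    using assms(2) unfolding good2_def by blast
  show ?thesis unfolding good2_def
  proof (intro exI allI impI)
    fix y z assume y: "y \<in> cyl2 k x" and z: "z \<in> cyl2 k x" and yz: "\<forall>i<max (max n1 n2) (Suc k). y i = z i"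
    have yzk: "y k = z k" using yz by simp
    show "f y = f z"
    proof (cases "y k")
      case True
      then have "y \<in> cyl2 (Suc k) (x(k:=True))" "z \<in> cyl2 (Suc k) (x(k:=True))"
        using y z yzk by (auto simp: cyl2_def less_Suc_eq)
      moreover have "\<forall>i<n1. y i = z i" using yz by simp
      ultimately show ?thesis using n1 by blast
    next
      case False
      then have "y \<in> cyl2 (Suc k) (x(k:=False))" "z \<in> cyl2 (Suc k) (x(k:=False))"
        using y z yzk by (auto simp: cyl2_def less_Suc_eq)
      moreover have "\<forall>i<n2. y i = z i" using yz by simp
      ultimately show ?thesis using n2 by blast
    qed
  qed
qed

lemma good2_cong: "(\<And>i. i < k \<Longrightarrow> x i = x' i) \<Longrightarrow> good2 f k x = good2 f k x'"
proof -
  assume "\<And>i. i < k \<Longrightarrow> x i = x' i"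
  then have "cyl2 k x = cyl2 k x'" by (auto simp: cyl2_def)
  then show ?thesis by (simp add: good2_def)
qed

primrec path2 :: "(Z2 \<Rightarrow> 'b) \<Rightarrow> nat \<Rightarrow> Z2" where
  "path2 f 0 = (\<lambda>_. False)"
| "path2 f (Suc k) = (if good2 f (Suc k) ((path2 f k)(k:=True)) then (path2 f k)(k:=False) else (path2 f k)(k:=True))"

lemma path2_stable: "i < k \<Longrightarrow> path2 f k i = path2 f (Suc i) i"
proof (induction k)
  case 0 then show ?case by simp
next
  case (Suc k)
  show ?case
  proof (cases "i = k")
    case True then show ?thesis by simp
  next
    case False then have "i < k" using Suc by simp
    then have "path2 f (Suc k) i = path2 f k i" using False by simp
    then show ?thesis using Suc.IH[OF \<open>i < k\<close>] by (simp only:)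
  qed
qed

lemma uniform_lc:
  fixes f :: "Z2 \<Rightarrow> 'b"
  assumes lc: "locally_constant2 f"
  shows "\<exists>N. dep2 N f"
proof (rule ccontr)
  assume nd: "\<not> (\<exists>N. dep2 N f)"
  have bad: "\<not> good2 f k (path2 f k)" for k
  proof (induction k)
    case 0
    show ?case
    proof
      assume "good2 f 0 (path2 f 0)"
      then obtain n where "\<forall>y z. y \<in> cyl2 0 (path2 f 0) \<longrightarrow> z \<in> cyl2 0 (path2 f 0) \<longrightarrow> (\<forall>i<n. y i = z i) \<longrightarrow> f y = f z"
        unfolding good2_def by blast
      moreover have "\<And>y. y \<in> cyl2 0 (path2 f 0)" by (simp add: cyl2_def)
      ultimately have "dep2 n f" unfolding dep2_def by blast
      then show False using nd by blast
    qed
  next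
    case (Suc k)
    show ?case
    proof (cases "good2 f (Suc k) ((path2 f k)(k:=True))")
      case True
      then have "path2 f (Suc k) = (path2 f k)(k:=False)" by simp
      then show ?thesis using Suc.IH good2_split[of f k "path2 f k"] True by metis
    next
      case False
      then have "path2 f (Suc k) = (path2 f k)(k:=True)" by (simp only: path2.simps if_False)
      then show ?thesis using False by (simp only: not_False_eq_True)
    qed
  qed
  define x where "x i = path2 f (Suc i) i" for i
  obtain n where n: "\<forall>y. (\<forall>i<n. y i = x i) \<longrightarrow> f y = f x"
    using lc unfolding locally_constant2_def by blast
  have "good2 f n x" unfolding good2_def
  proof (intro exI[of _ 0] allI impI)
    fix y z assume "y \<in> cyl2 n x" "z \<in> cyl2 n x"
    then have "\<forall>i<n. y i = x i" "\<forall>i<n. z i = x i" unfolding cyl2_def by auto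
    then have "f y = f x" "f z = f x" using n by blast+
    then show "f y = f z" by simp
  qed
  moreover have "good2 f n (path2 f n) = good2 f n x"
    unfolding x_def by (rule good2_cong) (erule path2_stable)
  ultimately show False using bad[of n] by simp
qed




definition chi2 :: "nat \<Rightarrow> nat \<Rightarrow> Z2 \<Rightarrow> complex" where
  "chi2 n a x = exp (- 2 * pi * \<i> * of_real (real a * real (trunc2 n x) / 2 ^ n))"

lemma fourier2_chi: "fourier2 f (n, a) = (LINT x|haar2. chi2 n a x * f x)"
  by (simp add: fourier2_def chi2_def)

lemma exp_2pi_int: "exp (2 * pi * \<i> * of_int m) = 1"
  using exp_integer_2pi[of "of_int m"] by (simp add: mult_ac)

lemma chi2_double: "chi2 (Suc n) (2 * b) x = chi2 n b x"
proof -
  define c :: nat where "c = (if x n then 1 else 0)"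
  have T: "trunc2 (Suc n) x = trunc2 n x + c * 2 ^ n" by (simp add: trunc2_Suc c_def)
  have "real (2 * b) * real (trunc2 (Suc n) x) / 2 ^ Suc n = real b * real (trunc2 n x) / 2 ^ n + real (b * c)"
    unfolding T by (simp add: field_simps)
  then have "chi2 (Suc n) (2 * b) x = exp (- 2 * pi * \<i> * of_real (real b * real (trunc2 n x) / 2 ^ n) + 2 * pi * \<i> * of_int (- int (b * c)))"
    unfolding chi2_def by (simp add: algebra_simps)
  also have "\<dots> = chi2 n b x" unfolding exp_add exp_2pi_int chi2_def by simp
  finally show ?thesis .
qed

lemma chi2_cnj_mult: "chi2 n a x * cnj (chi2 n a y) = exp (2 * pi * \<i> * of_real (real a * (real (trunc2 n y) - real (trunc2 n x)) / 2 ^ n))"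
  unfolding chi2_def exp_cnj by (simp add: exp_add[symmetric] algebra_simps diff_divide_distrib)

lemma roots_sum:
  fixes d :: int
  assumes "\<bar>d\<bar> < 2 ^ n"
  shows "(\<Sum>a<(2::nat)^n. exp (2 * pi * \<i> * of_real (real a * real_of_int d / 2 ^ n))) = (if d = 0 then 2 ^ n else 0)"
proof (cases "d = 0")
  case True then show ?thesis by simp
next
  case False
  define z where "z = exp (2 * pi * \<i> * of_real (real_of_int d / 2 ^ n))"
  have terms: "exp (2 * pi * \<i> * of_real (real a * real_of_int d / 2 ^ n)) = z ^ a" for a :: nat
    unfolding z_def exp_of_nat_mult[symmetric] by (simp add: algebra_simps)
  have zn: "z ^ (2 ^ n) = 1"
    unfolding z_def exp_of_nat_mult[symmetric] using exp_2pi_int[of d] by (simp add: algebra_simps)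
  have z1: "z \<noteq> 1"
  proof
    assume "z = 1"
    then obtain m :: int where m: "2 * pi * (real_of_int d / 2 ^ n) = of_int (2 * m) * pi"
      unfolding z_def exp_eq_1 by auto
    then have "real_of_int d = of_int m * 2 ^ n" by (simp add: field_simps)
    then have "d = m * 2 ^ n" by (metis of_int_eq_iff of_int_mult of_int_numeral of_int_power)
    then have "m \<noteq> 0" using False by simp
    then have "\<bar>d\<bar> \<ge> 2 ^ n" using \<open>d = m * 2 ^ n\<close> by (simp add: abs_mult mult_le_cancel_right1)
    then show False using assms by simp
  qed
  have "(\<Sum>a<(2::nat)^n. exp (2 * pi * \<i> * of_real (real a * real_of_int d / 2 ^ n))) = (\<Sum>a<(2::nat)^n. z ^ a)"
    by (simp only: terms)
  also have "\<dots> = 0" using z1 zn by (simp add: sum_gp_strict)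
  finally show ?thesis using False by simp
qed

definition Od2 :: "nat \<Rightarrow> nat set" where
  "Od2 n = (if n = 0 then {0} else {a. odd a \<and> a < 2 ^ n})"

definition P2 :: "(Z2 \<Rightarrow> complex) \<Rightarrow> nat \<Rightarrow> real" where
  "P2 f n = (\<Sum>a\<in>Od2 n. (cmod (fourier2 f (n, a)))\<^sup>2)"

lemma finite_Od2[simp]: "finite (Od2 n)"
  by (simp add: Od2_def)

lemma Lambda2_Sigma: "Lambda2 = Sigma UNIV Od2"
  by (auto simp: Lambda2_def Od2_def split: if_splits)

lemma fourier2_double: "fourier2 f (Suc n, 2 * b) = fourier2 f (n, b)"
  by (simp add: fourier2_chi chi2_double)

lemma P2_nonneg: "P2 f n \<ge> 0"
  unfolding P2_def by (intro sum_nonneg) simp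

lemma QP: "(\<Sum>a<(2::nat)^n. (cmod (fourier2 f (n, a)))\<^sup>2) = (\<Sum>m\<le>n. P2 f m)"
proof (induction n)
  case 0
  show ?case by (simp add: P2_def Od2_def lessThan_def)
next
  case (Suc n)
  have split: "{..<(2::nat)^Suc n} = Od2 (Suc n) \<union> (\<lambda>b. 2 * b) ` {..<2^n}"
  proof (intro set_eqI iffI)
    fix a assume a: "a \<in> {..<(2::nat)^Suc n}"
    show "a \<in> Od2 (Suc n) \<union> (\<lambda>b. 2 * b) ` {..<2^n}"
    proof (cases "odd a")
      case True then show ?thesis using a by (simp add: Od2_def)
    next
      case False
      then obtain b where "a = 2 * b" by blast
      then show ?thesis using a by auto
    qed
  next
    fix a assume "a \<in> Od2 (Suc n) \<union> (\<lambda>b. 2 * b) ` {..<(2::nat)^n}"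
    then show "a \<in> {..<2^Suc n}" by (auto simp: Od2_def)
  qed
  have disj: "Od2 (Suc n) \<inter> (\<lambda>b. 2 * b) ` {..<(2::nat)^n} = {}"
    by (auto simp: Od2_def)
  have "(\<Sum>a<(2::nat)^Suc n. (cmod (fourier2 f (Suc n, a)))\<^sup>2)
      = P2 f (Suc n) + (\<Sum>a\<in>(\<lambda>b. 2 * b) ` {..<(2::nat)^n}. (cmod (fourier2 f (Suc n, a)))\<^sup>2)"
    unfolding split P2_def by (rule sum.union_disjoint) (use disj in auto)
  also have "(\<Sum>a\<in>(\<lambda>b. 2 * b) ` {..<(2::nat)^n}. (cmod (fourier2 f (Suc n, a)))\<^sup>2)
      = (\<Sum>b<(2::nat)^n. (cmod (fourier2 f (n, b)))\<^sup>2)"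
    by (subst sum.reindex) (auto simp: inj_on_def fourier2_double)
  finally show ?case using Suc.IH by simp
qed




lemma swap_sum:
  fixes P :: "nat \<Rightarrow> real"
  shows "(\<Sum>k<N. q ^ k * (\<Sum>m\<in>{k<..N}. P m)) = (\<Sum>m\<le>N. P m * (\<Sum>k<m. q ^ k))"
proof (induction N)
  case 0 then show ?case by simp
next
  case (Suc N)
  have ins: "k < Suc N \<Longrightarrow> {k<..Suc N} = insert (Suc N) {k<..N}" for k by auto
  have "(\<Sum>k<Suc N. q ^ k * (\<Sum>m\<in>{k<..Suc N}. P m)) = (\<Sum>k<Suc N. q ^ k * (P (Suc N) + (\<Sum>m\<in>{k<..N}. P m)))"
    by (intro sum.cong refl) (simp add: ins)
  also have "\<dots> = P (Suc N) * (\<Sum>k<Suc N. q ^ k) + (\<Sum>k<Suc N. q ^ k * (\<Sum>m\<in>{k<..N}. P m))"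
    by (simp add: algebra_simps sum.distrib sum_distrib_left)
  also have "(\<Sum>k<Suc N. q ^ k * (\<Sum>m\<in>{k<..N}. P m)) = (\<Sum>k<N. q ^ k * (\<Sum>m\<in>{k<..N}. P m))"
    by simp
  finally show ?case using Suc.IH by simp
qed

lemma final_ineq:
  fixes P w :: "nat \<Rightarrow> real" and q :: real and N :: nat
  assumes q: "q > 1" and P: "\<And>n. P n \<ge> 0"
    and w1: "\<And>n. 1 \<le> w n" and wq: "\<And>n. q ^ n \<le> w n" and w0: "w 0 = 1"
    and wS: "\<And>k. w (Suc k) \<le> q ^ (k + 2)"
  defines "L \<equiv> (\<Sum>m\<le>N. P m)"
    and "G \<equiv> (\<Sum>k<N. q ^ k * ((\<Sum>m\<in>{k<..N}. P m) + P (Suc k)))"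
    and "H \<equiv> (\<Sum>n\<le>N. w n * P n)"
  shows "L + G \<le> (1 + 2 / (q - 1)) * H" "H \<le> (1 + q\<^sup>2) * (L + G)" "0 \<le> L" "0 \<le> G"
proof -
  have Rnn: "0 \<le> (\<Sum>m\<in>{k<..N}. P m)" for k by (intro sum_nonneg P)
  show L0: "0 \<le> L" unfolding L_def by (intro sum_nonneg P)
  show G0: "0 \<le> G" unfolding G_def using q by (intro sum_nonneg mult_nonneg_nonneg add_nonneg_nonneg Rnn P) auto
  have H0: "0 \<le> H" unfolding H_def using w1 P by (intro sum_nonneg mult_nonneg_nonneg) (auto intro: order.trans[OF zero_le_one])
  have LH: "L \<le> H" unfolding L_def H_def
  proof (intro sum_mono)
    fix m show "P m \<le> w m * P m" using mult_right_mono[OF w1[of m] P[of m]] by simp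
  qed
  have "G \<le> (\<Sum>k<N. q ^ k * (2 * (\<Sum>m\<in>{k<..N}. P m)))"
    unfolding G_def
  proof (intro sum_mono mult_left_mono)
    fix k assume "k \<in> {..<N}"
    then have "Suc k \<in> {k<..N}" by auto
    then have "P (Suc k) \<le> (\<Sum>m\<in>{k<..N}. P m)" by (intro member_le_sum P) auto
    then show "(\<Sum>m\<in>{k<..N}. P m) + P (Suc k) \<le> 2 * (\<Sum>m\<in>{k<..N}. P m)" by simp
    show "0 \<le> q ^ k" using q by simp
  qed
  also have "\<dots> = 2 * (\<Sum>k<N. q ^ k * (\<Sum>m\<in>{k<..N}. P m))"
    by (simp add: sum_distrib_left mult_ac)
  also have "\<dots> = 2 * (\<Sum>m\<le>N. P m * (\<Sum>k<m. q ^ k))"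
    by (simp only: swap_sum)
  also have "\<dots> \<le> 2 * (\<Sum>m\<le>N. w m * P m / (q - 1))"
  proof (intro mult_left_mono sum_mono)
    fix m
    have "(\<Sum>k<m. q ^ k) = (q ^ m - 1) / (q - 1)" using q by (simp add: geometric_sum)
    also have "\<dots> \<le> w m / (q - 1)" using q wq[of m] by (intro divide_right_mono) auto
    finally have "(\<Sum>k<m. q ^ k) \<le> w m / (q - 1)" .
    then have "P m * (\<Sum>k<m. q ^ k) \<le> P m * (w m / (q - 1))" by (intro mult_left_mono P)
    then show "P m * (\<Sum>k<m. q ^ k) \<le> w m * P m / (q - 1)" by (simp add: mult_ac)
  qed simp
  also have "\<dots> = 2 / (q - 1) * H" unfolding H_def by (simp add: sum_divide_distrib sum_distrib_left)
  finally have GH: "G \<le> 2 / (q - 1) * H" .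
  show "L + G \<le> (1 + 2 / (q - 1)) * H" using LH GH by (simp add: algebra_simps)
  have "H = w 0 * P 0 + (\<Sum>k<N. w (Suc k) * P (Suc k))"
    unfolding H_def by (rule sum.atMost_shift)
  also have "\<dots> \<le> P 0 + (\<Sum>k<N. q\<^sup>2 * (q ^ k * P (Suc k)))"
    using w0
  proof (intro add_mono sum_mono)
    fix k
    have "w (Suc k) * P (Suc k) \<le> q ^ (k + 2) * P (Suc k)" using wS P by (intro mult_right_mono) auto
    moreover have "q ^ (k + 2) * P (Suc k) = q\<^sup>2 * (q ^ k * P (Suc k))" by (simp add: power_add power2_eq_square mult_ac)
    ultimately show "w (Suc k) * P (Suc k) \<le> q\<^sup>2 * (q ^ k * P (Suc k))" by linarith
  qed simp
  also have "\<dots> \<le> L + q\<^sup>2 * G"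
  proof (intro add_mono)
    show "P 0 \<le> L" unfolding L_def by (intro member_le_sum P) auto
    have "(\<Sum>k<N. q ^ k * P (Suc k)) \<le> G" unfolding G_def
      using q Rnn by (intro sum_mono mult_left_mono) auto
    then show "(\<Sum>k<N. q\<^sup>2 * (q ^ k * P (Suc k))) \<le> q\<^sup>2 * G"
      by (simp add: sum_distrib_left[symmetric] mult_left_mono)
  qed
  also have "\<dots> \<le> (1 + q\<^sup>2) * (L + G)" using L0 G0 by (simp add: algebra_simps)
  finally show "H \<le> (1 + q\<^sup>2) * (L + G)" .
qed

lemma sqrt_sum_le: "0 \<le> a \<Longrightarrow> 0 \<le> b \<Longrightarrow> sqrt a + sqrt b \<le> sqrt (2 * (a + b))"
proof (rule real_le_rsqrt)
  assume a: "0 \<le> a" and b: "0 \<le> b"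
  have "0 \<le> (sqrt a - sqrt b)\<^sup>2" by simp
  then show "(sqrt a + sqrt b)\<^sup>2 \<le> 2 * (a + b)"
    using a b by (simp add: power2_eq_square algebra_simps)
qed

lemma norm_equiv:
  fixes L G H K1 K2 :: real
  assumes "0 \<le> L" "0 \<le> G" "0 \<le> H" "L + G \<le> K1 * H" "H \<le> K2 * (L + G)" "K1 > 0" "K2 > 0"
  shows "(1 / sqrt (2 * K1)) * (sqrt L + sqrt G) \<le> sqrt H" "sqrt H \<le> sqrt K2 * (sqrt L + sqrt G)"
proof -
  have "sqrt L + sqrt G \<le> sqrt (2 * (L + G))" using assms by (intro sqrt_sum_le)
  also have "\<dots> \<le> sqrt (2 * (K1 * H))" using assms by simp
  also have "\<dots> = sqrt (2 * K1) * sqrt H" by (simp add: real_sqrt_mult)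
  finally have "sqrt L + sqrt G \<le> sqrt (2 * K1) * sqrt H" .
  moreover have "sqrt (2 * K1) > 0" using assms by simp
  ultimately show "(1 / sqrt (2 * K1)) * (sqrt L + sqrt G) \<le> sqrt H"
    by (simp add: field_simps mult_ac)
  have "sqrt H \<le> sqrt (K2 * (L + G))" using assms by simp
  also have "\<dots> = sqrt K2 * sqrt (L + G)" by (simp add: real_sqrt_mult)
  also have "\<dots> \<le> sqrt K2 * (sqrt L + sqrt G)"
    using assms by (intro mult_left_mono sqrt_add_le_add_sqrt) auto
  finally show "sqrt H \<le> sqrt K2 * (sqrt L + sqrt G)" .
qed

definition wt2 :: "real \<Rightarrow> nat \<Rightarrow> real" where
  "wt2 s n = (1 + (if n = 0 then 0 else 2 ^ n)) powr (2 * s)"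

lemma q_pow: "(2 powr (2 * s)) ^ n = (2 ^ n) powr (2 * (s::real))"
proof -
  have "(2 powr (2 * s)) ^ n = 2 powr (real n * (2 * s))" by (simp add: powr_power)
  also have "\<dots> = (2 powr real n) powr (2 * s)" by (simp add: powr_powr)
  also have "\<dots> = (2 ^ n) powr (2 * s)" by (simp add: powr_realpow)
  finally show ?thesis .
qed

lemma wt2_props:
  fixes s :: real assumes s: "s > 0"
  shows "wt2 s 0 = 1" "1 \<le> wt2 s n" "(2 powr (2 * s)) ^ n \<le> wt2 s n"
    "wt2 s (Suc k) \<le> (2 powr (2 * s)) ^ (k + 2)"
proof -
  show "wt2 s 0 = 1" by (simp add: wt2_def)
  show "1 \<le> wt2 s n" unfolding wt2_def using s by (intro ge_one_powr_ge_zero) auto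
  show "(2 powr (2 * s)) ^ n \<le> wt2 s n"
  proof (cases "n = 0")
    case True then show ?thesis by (simp add: wt2_def)
  next
    case False
    then show ?thesis unfolding q_pow wt2_def using s by (intro powr_mono2) auto
  qed
  show "wt2 s (Suc k) \<le> (2 powr (2 * s)) ^ (k + 2)"
    unfolding q_pow wt2_def using s
  proof (intro powr_mono2)
    have "(1::real) \<le> 2 ^ Suc k" by (rule one_le_power) simp
    then show "1 + (if Suc k = 0 then 0 else 2 ^ Suc k) \<le> (2::real) ^ (k + 2)" by simp
  qed auto
qed

lemma coef_eq: "(2::real) powr ((1 + 2 * (s::real)) * real k) * (1/2) ^ k = (2 powr (2 * s)) ^ k"
proof -
  have "(2::real) powr ((1 + 2 * s) * real k) = 2 powr real k * 2 powr (real k * (2 * s))"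
    by (simp add: powr_add[symmetric] algebra_simps)
  also have "\<dots> = 2 ^ k * (2 powr (2 * s)) ^ k" by (simp add: powr_realpow powr_power)
  finally show ?thesis by (simp add: power_one_over field_simps)
qed




lemma dep2I: "(\<And>x y. (\<And>i. i < M \<Longrightarrow> x i = y i) \<Longrightarrow> g x = g y) \<Longrightarrow> dep2 M g"
  unfolding dep2_def by blast

lemma chi2_agree: "(\<And>i. i < M \<Longrightarrow> x i = y i) \<Longrightarrow> n \<le> M \<Longrightarrow> chi2 n a x = chi2 n a y"
  unfolding chi2_def by (subst trunc2_cong[of n x y]) auto

lemma cyl2_agree: "(\<And>i. i < M \<Longrightarrow> x i = y i) \<Longrightarrow> k \<le> M \<Longrightarrow> cyl2 k x = cyl2 k y"
  unfolding cyl2_def by auto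

lemma cyl2_mem_agree: "(\<And>i. i < M \<Longrightarrow> y i = y' i) \<Longrightarrow> k \<le> M \<Longrightarrow> (y \<in> cyl2 k x) = (y' \<in> cyl2 k x)"
  unfolding cyl2_def by auto

lemma cyl2_sym: "y \<in> cyl2 k x \<longleftrightarrow> x \<in> cyl2 k y"
  unfolding cyl2_def by auto

lemma cyl2_trunc: "y \<in> cyl2 k x \<longleftrightarrow> trunc2 k x = trunc2 k y"
  unfolding cyl2_def trunc2_eq_iff by auto

context
  fixes f :: "Z2 \<Rightarrow> complex" and N :: nat
  assumes depf: "dep2 N f"
begin

lemma f_agree: "(\<And>i. i < M \<Longrightarrow> x i = y i) \<Longrightarrow> N \<le> M \<Longrightarrow> f x = f y"
  using depf unfolding dep2_def by auto

definition Sc :: "nat \<Rightarrow> complex" where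
  "Sc n = (LINT x|haar2. LINT y|haar2. indicator (cyl2 n x) y *\<^sub>R (f x * cnj (f y)))"

lemma parseval_level:
  "complex_of_real (\<Sum>a<(2::nat)^n. (cmod (fourier2 f (n, a)))\<^sup>2) = 2 ^ n * Sc n"
proof -
  define M where "M = max n N"
  have nM: "n \<le> M" and NM: "N \<le> M" by (auto simp: M_def)
  define g where "g a x y = (chi2 n a x * f x) * (cnj (chi2 n a y) * cnj (f y))" for a x y
  have dg: "dep2 M (g a x)" for a x
  proof (rule dep2I)
    fix y y' :: Z2 assume H: "\<And>i. i < M \<Longrightarrow> y i = y' i"
    show "g a x y = g a x y'" unfolding g_def using chi2_agree[OF H nM] f_agree[OF H NM] by simp
  qed
  have dg2: "dep2 M (\<lambda>x. g a x y)" for a y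
  proof (rule dep2I)
    fix x x' :: Z2 assume H: "\<And>i. i < M \<Longrightarrow> x i = x' i"
    show "g a x y = g a x' y" unfolding g_def using chi2_agree[OF H nM] f_agree[OF H NM] by simp
  qed
  have F2: "complex_of_real ((cmod (fourier2 f (n, a)))\<^sup>2) = (LINT x|haar2. LINT y|haar2. g a x y)" for a
  proof -
    have "complex_of_real ((cmod (fourier2 f (n, a)))\<^sup>2) = fourier2 f (n, a) * cnj (fourier2 f (n, a))"
      by (rule complex_norm_square)
    also have "\<dots> = (LINT x|haar2. chi2 n a x * f x) * (LINT y|haar2. cnj (chi2 n a y * f y))"
      by (subst Bochner_Integration.integral_cnj) (simp only: fourier2_chi)
    also have "\<dots> = (LINT x|haar2. chi2 n a x * f x) * (LINT y|haar2. cnj (chi2 n a y) * cnj (f y))"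
      by simp
    also have "\<dots> = (LINT x|haar2. (chi2 n a x * f x) * (LINT y|haar2. cnj (chi2 n a y) * cnj (f y)))"
      by simp
    also have "\<dots> = (LINT x|haar2. LINT y|haar2. g a x y)"
      unfolding g_def by simp
    finally show ?thesis .
  qed
  have "complex_of_real (\<Sum>a<(2::nat)^n. (cmod (fourier2 f (n, a)))\<^sup>2) = (\<Sum>a<(2::nat)^n. (LINT x|haar2. LINT y|haar2. g a x y))"
    by (simp only: of_real_sum F2)
  also have "\<dots> = (LINT x|haar2. (\<Sum>a<(2::nat)^n. (LINT y|haar2. g a x y)))"
    by (rule Bochner_Integration.integral_sum[symmetric]) (rule dep2_integrable[OF dep2_int_inner[OF dg2]])
  also have "\<dots> = (LINT x|haar2. LINT y|haar2. (\<Sum>a<(2::nat)^n. g a x y))"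
    by (intro Bochner_Integration.integral_cong refl Bochner_Integration.integral_sum[symmetric] dep2_integrable[OF dg])
  also have "\<dots> = (LINT x|haar2. LINT y|haar2. 2 ^ n * (indicator (cyl2 n x) y *\<^sub>R (f x * cnj (f y))))"
  proof (intro Bochner_Integration.integral_cong refl)
    fix x y
    define d where "d = int (trunc2 n y) - int (trunc2 n x)"
    have "int (trunc2 n x) < 2^n" "int (trunc2 n y) < 2^n"
      by (metis of_nat_less_iff of_nat_numeral of_nat_power trunc2_less)+
    then have dabs: "\<bar>d\<bar> < 2 ^ n" unfolding d_def by linarith
    have rd: "real_of_int d = real (trunc2 n y) - real (trunc2 n x)" unfolding d_def by simp
    have d0: "d = 0 \<longleftrightarrow> y \<in> cyl2 n x" unfolding d_def cyl2_trunc by auto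
    have "(\<Sum>a<(2::nat)^n. g a x y) = (\<Sum>a<(2::nat)^n. chi2 n a x * cnj (chi2 n a y)) * (f x * cnj (f y))"
      unfolding g_def sum_distrib_right by (intro sum.cong refl) (simp add: mult_ac)
    also have "(\<Sum>a<(2::nat)^n. chi2 n a x * cnj (chi2 n a y)) = (if d = 0 then 2 ^ n else 0)"
      unfolding chi2_cnj_mult using roots_sum[OF dabs] by (simp add: rd)
    finally show "(\<Sum>a<(2::nat)^n. g a x y) = 2 ^ n * (indicator (cyl2 n x) y *\<^sub>R (f x * cnj (f y)))"
      using d0 by (simp add: indicator_def)
  qed
  also have "\<dots> = 2 ^ n * Sc n"
    unfolding Sc_def by (simp only: integral_mult_right_zero)
  finally show ?thesis .
qed

lemma agree_facts:
  assumes H: "\<And>i. i < M \<Longrightarrow> y i = y' i" and "N \<le> M" "k \<le> M"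
  shows "f y = f y'" "\<And>x. indicator (cyl2 k x) y = (indicator (cyl2 k x) y' :: real)"
    "\<And>x. indicator (cyl2 k y) x = (indicator (cyl2 k y') x :: real)"
  using f_agree[OF H assms(2)] cyl2_mem_agree[OF H assms(3)] cyl2_agree[OF H assms(3)]
  by (auto simp: indicator_def)

definition L2 :: real where "L2 = (LINT x|haar2. (cmod (f x))\<^sup>2)"

lemma cyl_int_scaleR:
  fixes c :: "'a::{banach,second_countable_topology}"
  shows "(LINT y|haar2. indicator (cyl2 k x) y *\<^sub>R c) = (1/2)^k *\<^sub>R c"
  by (subst integral_scaleR_left) (simp_all add: cyl2_measure del: power_one_over)

lemma cyl_int_mult:
  fixes c :: real
  shows "(LINT y|haar2. indicator (cyl2 k x) y * c) = (1/2)^k * c"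
  using cyl_int_scaleR[of k x c] by simp

lemma Sc_top:
  assumes "N \<le> n"
  shows "2 ^ n * Sc n = complex_of_real L2"
proof -
  have "Sc n = (LINT x|haar2. LINT y|haar2. indicator (cyl2 n x) y *\<^sub>R complex_of_real ((cmod (f x))\<^sup>2))"
    unfolding Sc_def
  proof (intro Bochner_Integration.integral_cong refl)
    fix x y
    show "indicator (cyl2 n x) y *\<^sub>R (f x * cnj (f y)) = indicator (cyl2 n x) y *\<^sub>R complex_of_real ((cmod (f x))\<^sup>2)"
    proof (cases "y \<in> cyl2 n x")
      case True
      then have "f y = f x" using f_agree[of n y x] assms unfolding cyl2_def by auto
      then show ?thesis by (simp only: complex_norm_square)
    qed simp
  qed
  also have "\<dots> = (LINT x|haar2. (1/2)^n *\<^sub>R complex_of_real ((cmod (f x))\<^sup>2))"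
    by (simp only: cyl_int_scaleR)
  also have "\<dots> = (1/2)^n *\<^sub>R complex_of_real L2"
    unfolding L2_def by (simp del: of_real_power)
  finally show ?thesis by (simp add: scaleR_conv_of_real power_one_over)
qed

lemma cmod_diff_sq: "(cmod (a - b))\<^sup>2 = (cmod a)\<^sup>2 + (cmod b)\<^sup>2 - 2 * Re (a * cnj b)"
  unfolding cmod_power2 by (simp add: power2_eq_square algebra_simps)

definition A2 :: "nat \<Rightarrow> real" where
  "A2 k = (LINT x|haar2. LINT y|haar2. indicator (cyl2 k x) y * (cmod (f x - f y))\<^sup>2)"

lemma A2_eq: "A2 k = 2 * (1/2)^k * L2 - 2 * Re (Sc k)"
proof -
  define M where "M = max k N"
  have kM: "k \<le> M" and NM: "N \<le> M" by (auto simp: M_def)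
  define t1 where "t1 x y = indicator (cyl2 k x) y * (cmod (f x))\<^sup>2" for x y
  define t2 where "t2 x y = indicator (cyl2 k x) y * (cmod (f y))\<^sup>2" for x y
  define t3 where "t3 x y = 2 * Re (indicator (cyl2 k x) y *\<^sub>R (f x * cnj (f y)))" for x y
  have d1_t1: "dep2 M (t1 x)" for x
  proof (rule dep2I)
    fix y y' :: Z2 assume H: "\<And>i. i < M \<Longrightarrow> y i = y' i"
    note a = agree_facts[OF H NM kM]
    show "t1 x y = t1 x y'" by (simp only: t1_def a)
  qed
  have d1_t2: "dep2 M (t2 x)" for x
  proof (rule dep2I)
    fix y y' :: Z2 assume H: "\<And>i. i < M \<Longrightarrow> y i = y' i"
    note a = agree_facts[OF H NM kM]
    show "t2 x y = t2 x y'" by (simp only: t2_def a)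
  qed
  have d1_t3: "dep2 M (t3 x)" for x
  proof (rule dep2I)
    fix y y' :: Z2 assume H: "\<And>i. i < M \<Longrightarrow> y i = y' i"
    note a = agree_facts[OF H NM kM]
    show "t3 x y = t3 x y'" by (simp only: t3_def a)
  qed
  have d2_t1: "dep2 M (\<lambda>x. t1 x y)" for y
  proof (rule dep2I)
    fix x x' :: Z2 assume H: "\<And>i. i < M \<Longrightarrow> x i = x' i"
    note a = agree_facts[OF H NM kM]
    show "t1 x y = t1 x' y" by (simp only: t1_def a)
  qed
  have d2_t2: "dep2 M (\<lambda>x. t2 x y)" for y
  proof (rule dep2I)
    fix x x' :: Z2 assume H: "\<And>i. i < M \<Longrightarrow> x i = x' i"
    note a = agree_facts[OF H NM kM]
    show "t2 x y = t2 x' y" by (simp only: t2_def a)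
  qed
  have d2_t3: "dep2 M (\<lambda>x. t3 x y)" for y
  proof (rule dep2I)
    fix x x' :: Z2 assume H: "\<And>i. i < M \<Longrightarrow> x i = x' i"
    note a = agree_facts[OF H NM kM]
    show "t3 x y = t3 x' y" by (simp only: t3_def a)
  qed
  note d1 = d1_t1 d1_t2 d1_t3
  note d2 = d2_t1 d2_t2 d2_t3
  note I1 = dep2_integrable[OF d1(1)] dep2_integrable[OF d1(2)] dep2_integrable[OF d1(3)]
  note I2 = dep2_integrable[OF dep2_int_inner[OF d2(1)]] dep2_integrable[OF dep2_int_inner[OF d2(2)]]
            dep2_integrable[OF dep2_int_inner[OF d2(3)]]
  have "A2 k = (LINT x|haar2. (LINT y|haar2. t1 x y) + (LINT y|haar2. t2 x y) - (LINT y|haar2. t3 x y))"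
    unfolding A2_def
  proof (intro Bochner_Integration.integral_cong refl)
    fix x
    have "(LINT y|haar2. indicator (cyl2 k x) y * (cmod (f x - f y))\<^sup>2) = (LINT y|haar2. t1 x y + t2 x y - t3 x y)"
      by (intro Bochner_Integration.integral_cong refl)
        (simp add: t1_def t2_def t3_def cmod_diff_sq algebra_simps)
    also have "\<dots> = (LINT y|haar2. t1 x y) + (LINT y|haar2. t2 x y) - (LINT y|haar2. t3 x y)"
      using I1 by simp
    finally show "(LINT y|haar2. indicator (cyl2 k x) y * (cmod (f x - f y))\<^sup>2) = (LINT y|haar2. t1 x y) + (LINT y|haar2. t2 x y) - (LINT y|haar2. t3 x y)" .
  qed
  also have "\<dots> = (LINT x|haar2. LINT y|haar2. t1 x y) + (LINT x|haar2. LINT y|haar2. t2 x y) - (LINT x|haar2. LINT y|haar2. t3 x y)"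
    using I2 by simp
  also have "(LINT x|haar2. LINT y|haar2. t1 x y) = (1/2)^k * L2"
    unfolding t1_def L2_def by (simp only: cyl_int_mult integral_mult_right_zero)
  also have "(LINT x|haar2. LINT y|haar2. t2 x y) = (LINT y|haar2. LINT x|haar2. t2 x y)"
    by (rule dep2_swap[OF d2(2) d1(2)])
  also have "\<dots> = (LINT y|haar2. LINT x|haar2. indicator (cyl2 k y) x * (cmod (f y))\<^sup>2)"
    unfolding t2_def indicator_def by (subst cyl2_sym) (rule refl)
  also have "\<dots> = (1/2)^k * L2"
    unfolding L2_def by (simp only: cyl_int_mult integral_mult_right_zero)
  also have "(LINT x|haar2. LINT y|haar2. t3 x y) = 2 * Re (Sc k)"
  proof -
    have "(LINT x|haar2. LINT y|haar2. t3 x y) = (LINT x|haar2. 2 * Re (LINT y|haar2. indicator (cyl2 k x) y *\<^sub>R (f x * cnj (f y))))"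
    proof (intro Bochner_Integration.integral_cong refl)
      fix x
      have dg: "dep2 M (\<lambda>y. indicator (cyl2 k x) y *\<^sub>R (f x * cnj (f y)))"
      proof (rule dep2I)
        fix y y' :: Z2 assume H: "\<And>i. i < M \<Longrightarrow> y i = y' i"
        note a = agree_facts[OF H NM kM]
        show "indicator (cyl2 k x) y *\<^sub>R (f x * cnj (f y)) = indicator (cyl2 k x) y' *\<^sub>R (f x * cnj (f y'))" by (simp only: a)
      qed
      then show "(LINT y|haar2. t3 x y) = 2 * Re (LINT y|haar2. indicator (cyl2 k x) y *\<^sub>R (f x * cnj (f y)))"
        unfolding t3_def by (simp only: integral_mult_right_zero integral_Re[OF dep2_integrable[OF dg]])
    qed
    also have "\<dots> = 2 * Re (Sc k)"
    proof -
      have dg: "dep2 M (\<lambda>x. LINT y|haar2. indicator (cyl2 k x) y *\<^sub>R (f x * cnj (f y)))"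
      proof (rule dep2_int_inner, rule dep2I)
        fix x x' y :: Z2 assume H: "\<And>i. i < M \<Longrightarrow> x i = x' i"
        note a = agree_facts[OF H NM kM]
        show "indicator (cyl2 k x) y *\<^sub>R (f x * cnj (f y)) = indicator (cyl2 k x') y *\<^sub>R (f x' * cnj (f y))" by (simp only: a)
      qed
      then show ?thesis unfolding Sc_def by (simp only: integral_mult_right_zero integral_Re[OF dep2_integrable[OF dg]])
    qed
    finally show ?thesis .
  qed
  finally show ?thesis by simp
qed

definition u2 :: "nat \<Rightarrow> Z2 \<Rightarrow> Z2 \<Rightarrow> real" where
  "u2 k x y = indicator (cyl2 k x) y * (cmod (f x - f y))\<^sup>2"

lemma u2_dep:
  assumes "k \<le> M" "N \<le> M"
  shows "dep2 M (u2 k x)" "dep2 M (\<lambda>x. u2 k x y)"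
proof -
  show "dep2 M (u2 k x)"
  proof (rule dep2I)
    fix y y' :: Z2 assume H: "\<And>i. i < M \<Longrightarrow> y i = y' i"
    note a = agree_facts[OF H assms(2,1)]
    show "u2 k x y = u2 k x y'" by (simp only: u2_def a)
  qed
  show "dep2 M (\<lambda>x. u2 k x y)"
  proof (rule dep2I)
    fix x x' :: Z2 assume H: "\<And>i. i < M \<Longrightarrow> x i = x' i"
    note a = agree_facts[OF H assms(2,1)]
    show "u2 k x y = u2 k x' y" by (simp only: u2_def a)
  qed
qed

lemma A2_u2: "A2 k = (LINT x|haar2. LINT y|haar2. u2 k x y)"
  unfolding A2_def u2_def ..

lemma gagliardo_pointwise:
  fixes s :: real
  shows "(cmod (f x - f y))\<^sup>2 / abs2_diff x y powr (1 + 2 * s)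
     = (\<Sum>k<N. 2 powr ((1 + 2 * s) * k) * (u2 k x y - u2 (Suc k) x y))"
proof (cases "x = y")
  case True then show ?thesis by (simp add: u2_def)
next
  case False
  define v where "v = (LEAST i. x i \<noteq> y i)"
  have ex: "\<exists>i. x i \<noteq> y i" using False by auto
  have xv: "x v \<noteq> y v" unfolding v_def using LeastI_ex[OF ex] .
  have below: "\<And>i. i < v \<Longrightarrow> x i = y i" unfolding v_def using not_less_Least by blast
  have mem: "y \<in> cyl2 k x \<longleftrightarrow> k \<le> v" for k
  proof
    assume yk: "y \<in> cyl2 k x"
    show "k \<le> v"
    proof (rule ccontr)
      assume "\<not> k \<le> v"
      then have "v < k" by simp
      then have "y v = x v" using yk unfolding cyl2_def by blast
      then show False using xv by simp
    qed
  next
    assume "k \<le> v" then show "y \<in> cyl2 k x" using below unfolding cyl2_def by auto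
  qed
  have absd: "abs2_diff x y = 2 powr (- real v)" unfolding abs2_diff_def v_def using False by simp
  show ?thesis
  proof (cases "v < N")
    case True
    have "(\<Sum>k<N. 2 powr ((1 + 2 * s) * k) * (u2 k x y - u2 (Suc k) x y))
        = (\<Sum>k<N. if k = v then 2 powr ((1 + 2 * s) * v) * (cmod (f x - f y))\<^sup>2 else 0)"
      by (intro sum.cong refl) (auto simp: u2_def mem indicator_def)
    also have "\<dots> = 2 powr ((1 + 2 * s) * v) * (cmod (f x - f y))\<^sup>2"
      using True by simp
    also have "\<dots> = (cmod (f x - f y))\<^sup>2 / abs2_diff x y powr (1 + 2 * s)"
    proof -
      have "- real v * (1 + 2 * s) = - ((1 + 2 * s) * real v)" by simp
      then have "abs2_diff x y powr (1 + 2 * s) = inverse (2 powr ((1 + 2 * s) * real v))"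
        unfolding absd powr_powr by (simp only: powr_minus)
      then show ?thesis by (simp add: divide_inverse)
    qed
    finally show ?thesis ..
  next
    case False
    then have "\<And>i. i < N \<Longrightarrow> x i = y i" using below by simp
    then have "f x = f y" by (rule f_agree[OF _ order.refl])
    then show ?thesis by (simp add: u2_def)
  qed
qed

lemma gagliardo_eq:
  fixes s :: real
  shows "(LINT x|haar2. LINT y|haar2. (cmod (f x - f y))\<^sup>2 / abs2_diff x y powr (1 + 2 * s))
     = (\<Sum>k<N. 2 powr ((1 + 2 * s) * k) * (A2 k - A2 (Suc k)))"
proof -
  have ia: "integrable haar2 (u2 k x)" if "k \<le> N" for k x
    by (rule dep2_integrable[OF u2_dep(1)[OF that order.refl]])
  have ib: "integrable haar2 (\<lambda>x. LINT y|haar2. u2 k x y)" if "k \<le> N" for k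
    using dep2_integrable[OF dep2_int_inner[OF u2_dep(2)[OF that order.refl]]] .
  have "(LINT x|haar2. LINT y|haar2. (cmod (f x - f y))\<^sup>2 / abs2_diff x y powr (1 + 2 * s))
      = (LINT x|haar2. (\<Sum>k<N. 2 powr ((1 + 2 * s) * k) * ((LINT y|haar2. u2 k x y) - (LINT y|haar2. u2 (Suc k) x y))))"
  proof (intro Bochner_Integration.integral_cong refl)
    fix x
    have "(LINT y|haar2. (cmod (f x - f y))\<^sup>2 / abs2_diff x y powr (1 + 2 * s))
        = (LINT y|haar2. (\<Sum>k<N. 2 powr ((1 + 2 * s) * k) * (u2 k x y - u2 (Suc k) x y)))"
      by (simp only: gagliardo_pointwise)
    also have "\<dots> = (\<Sum>k<N. 2 powr ((1 + 2 * s) * k) * ((LINT y|haar2. u2 k x y) - (LINT y|haar2. u2 (Suc k) x y)))"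
    proof (subst Bochner_Integration.integral_sum)
      fix k assume "k \<in> {..<N}"
      then have k: "k \<le> N" "Suc k \<le> N" by auto
      show "integrable haar2 (\<lambda>y. 2 powr ((1 + 2 * s) * k) * (u2 k x y - u2 (Suc k) x y))"
        by (intro integrable_mult_right Bochner_Integration.integrable_diff ia k)
    next
      show "(\<Sum>k<N. LINT y|haar2. 2 powr ((1 + 2 * s) * k) * (u2 k x y - u2 (Suc k) x y)) =
          (\<Sum>k<N. 2 powr ((1 + 2 * s) * k) * ((LINT y|haar2. u2 k x y) - (LINT y|haar2. u2 (Suc k) x y)))"
      proof (intro sum.cong refl)
        fix k assume "k \<in> {..<N}"
        then have k: "k \<le> N" "Suc k \<le> N" by auto
        show "(LINT y|haar2. 2 powr ((1 + 2 * s) * k) * (u2 k x y - u2 (Suc k) x y)) =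
            2 powr ((1 + 2 * s) * k) * ((LINT y|haar2. u2 k x y) - (LINT y|haar2. u2 (Suc k) x y))"
          by (simp only: integral_mult_right_zero Bochner_Integration.integral_diff[OF ia[OF k(1)] ia[OF k(2)]])
      qed
    qed
    finally show "(LINT y|haar2. (cmod (f x - f y))\<^sup>2 / abs2_diff x y powr (1 + 2 * s))
        = (\<Sum>k<N. 2 powr ((1 + 2 * s) * k) * ((LINT y|haar2. u2 k x y) - (LINT y|haar2. u2 (Suc k) x y)))" .
  qed
  also have "\<dots> = (\<Sum>k<N. 2 powr ((1 + 2 * s) * k) * (A2 k - A2 (Suc k)))"
    unfolding A2_u2
  proof (subst Bochner_Integration.integral_sum)
    fix k assume "k \<in> {..<N}"
    then have k: "k \<le> N" "Suc k \<le> N" by auto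
    show "integrable haar2 (\<lambda>x. 2 powr ((1 + 2 * s) * k) * ((LINT y|haar2. u2 k x y) - (LINT y|haar2. u2 (Suc k) x y)))"
      by (intro integrable_mult_right Bochner_Integration.integrable_diff ib k)
  next
    show "(\<Sum>k<N. LINT x|haar2. 2 powr ((1 + 2 * s) * k) * ((LINT y|haar2. u2 k x y) - (LINT y|haar2. u2 (Suc k) x y))) =
        (\<Sum>k<N. 2 powr ((1 + 2 * s) * k) * ((LINT x|haar2. LINT y|haar2. u2 k x y) - (LINT x|haar2. LINT y|haar2. u2 (Suc k) x y)))"
    proof (intro sum.cong refl)
      fix k assume "k \<in> {..<N}"
      then have k: "k \<le> N" "Suc k \<le> N" by auto
      show "(LINT x|haar2. 2 powr ((1 + 2 * s) * k) * ((LINT y|haar2. u2 k x y) - (LINT y|haar2. u2 (Suc k) x y))) =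
          2 powr ((1 + 2 * s) * k) * ((LINT x|haar2. LINT y|haar2. u2 k x y) - (LINT x|haar2. LINT y|haar2. u2 (Suc k) x y))"
        by (simp only: integral_mult_right_zero Bochner_Integration.integral_diff[OF ib[OF k(1)] ib[OF k(2)]])
    qed
  qed
  finally show ?thesis .
qed


lemma L2_eq: "L2 = (LINT x|haar2. (cmod (f x))\<^sup>2)"
  unfolding L2_def ..

definition Q2 :: "nat \<Rightarrow> real" where
  "Q2 n = (\<Sum>a<(2::nat)^n. (cmod (fourier2 f (n, a)))\<^sup>2)"

lemma Re_Sc: "Re (Sc n) = Q2 n / 2 ^ n"
proof -
  have "complex_of_real (Q2 n) = 2 ^ n * Sc n" unfolding Q2_def by (rule parseval_level)
  then have "Sc n = complex_of_real (Q2 n / 2 ^ n)" by (simp add: field_simps)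
  then show ?thesis by simp
qed

lemma Q2_top: "N \<le> n \<Longrightarrow> Q2 n = L2"
proof -
  assume "N \<le> n"
  have "complex_of_real (Q2 n) = 2 ^ n * Sc n" unfolding Q2_def by (rule parseval_level)
  also have "\<dots> = complex_of_real L2" by (rule Sc_top) fact
  finally show ?thesis by simp
qed

lemma Q2_P: "Q2 n = (\<Sum>m\<le>n. P2 f m)"
  unfolding Q2_def by (rule QP)

lemma P2_zero: "N < n \<Longrightarrow> P2 f n = 0"
proof -
  assume "N < n"
  then obtain m where m: "n = Suc m" "N \<le> m" by (cases n) auto
  have "Q2 (Suc m) = Q2 m + P2 f (Suc m)" unfolding Q2_P by simp
  then show ?thesis using Q2_top[of m] Q2_top[of "Suc m"] m by simp
qed

lemma F_zero: "N < n \<Longrightarrow> a \<in> Od2 n \<Longrightarrow> fourier2 f (n, a) = 0"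
proof -
  assume "N < n" "a \<in> Od2 n"
  then have "(\<Sum>a\<in>Od2 n. (cmod (fourier2 f (n, a)))\<^sup>2) = 0" using P2_zero unfolding P2_def by blast
  then have "\<forall>a\<in>Od2 n. (cmod (fourier2 f (n, a)))\<^sup>2 = 0" by (subst (asm) sum_nonneg_eq_0_iff) auto
  then show ?thesis using \<open>a \<in> Od2 n\<close> by simp
qed

lemma L2_P: "L2 = (\<Sum>m\<le>N. P2 f m)"
  using Q2_top[of N] Q2_P[of N] by simp

lemma sum_split_at: "(k::nat) \<le> N' \<Longrightarrow> (\<Sum>m\<le>N'. g m) = (\<Sum>m\<le>k. g m) + (\<Sum>m\<in>{k<..N'}. (g m :: real))"
proof -
  assume "k \<le> N'"
  then have "{..N'} = {..k} \<union> {k<..N'}" by auto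
  moreover have "{..k} \<inter> {k<..N'} = {}" by auto
  ultimately show ?thesis by (simp add: sum.union_disjoint)
qed

definition R2 :: "nat \<Rightarrow> real" where
  "R2 k = (\<Sum>m\<in>{k<..N}. P2 f m)"

lemma A2_R: "k \<le> N \<Longrightarrow> A2 k = 2 * (1/2)^k * R2 k"
proof -
  assume k: "k \<le> N"
  have "L2 - Q2 k = R2 k" unfolding L2_P Q2_P R2_def using sum_split_at[OF k] by simp
  then show ?thesis unfolding A2_eq Re_Sc by (simp add: field_simps power_one_over)
qed

lemma R2_Suc: "k < N \<Longrightarrow> R2 k = R2 (Suc k) + P2 f (Suc k)"
proof -
  assume "k < N"
  then have "{k<..N} = insert (Suc k) {Suc k<..N}" by auto
  then show ?thesis unfolding R2_def by simp
qed

lemma gagliardo_final: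
  fixes s :: real
  shows "(LINT x|haar2. LINT y|haar2. (cmod (f x - f y))\<^sup>2 / abs2_diff x y powr (1 + 2 * s))
     = (\<Sum>k<N. (2 powr (2 * s)) ^ k * ((\<Sum>m\<in>{k<..N}. P2 f m) + P2 f (Suc k)))"
  unfolding gagliardo_eq
proof (intro sum.cong refl)
  fix k assume "k \<in> {..<N}"
  then have k: "k < N" by simp
  have "A2 k - A2 (Suc k) = (1/2)^k * (2 * R2 k - R2 (Suc k))"
    using A2_R[of k] A2_R[of "Suc k"] k by (simp add: field_simps)
  also have "2 * R2 k - R2 (Suc k) = R2 k + P2 f (Suc k)" using R2_Suc[OF k] by simp
  finally have "2 powr ((1 + 2 * s) * real k) * (A2 k - A2 (Suc k)) = (2 powr ((1 + 2 * s) * real k) * (1/2)^k) * (R2 k + P2 f (Suc k))"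
    by simp
  also have "\<dots> = (2 powr (2 * s)) ^ k * (R2 k + P2 f (Suc k))" by (simp only: coef_eq)
  finally show "2 powr ((1 + 2 * s) * real k) * (A2 k - A2 (Suc k)) = (2 powr (2 * s)) ^ k * ((\<Sum>m\<in>{k<..N}. P2 f m) + P2 f (Suc k))"
    unfolding R2_def .
qed

lemma Hs_final:
  fixes s :: real
  shows "(\<Sum>\<^sub>\<infinity>l\<in>Lambda2. (1 + lam_abs2 l) powr (2 * s) * (cmod (fourier2 f l))\<^sup>2) = (\<Sum>n\<le>N. wt2 s n * P2 f n)"
proof -
  let ?g = "\<lambda>l. (1 + lam_abs2 l) powr (2 * s) * (cmod (fourier2 f l))\<^sup>2"
  have "(\<Sum>\<^sub>\<infinity>l\<in>Lambda2. ?g l) = (\<Sum>\<^sub>\<infinity>l\<in>Sigma {..N} Od2. ?g l)"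
  proof (rule infsum_cong_neutral)
    fix l assume "l \<in> Lambda2 - Sigma {..N} Od2"
    obtain n a where l: "l = (n, a)" by (cases l)
    with \<open>l \<in> Lambda2 - Sigma {..N} Od2\<close> have "a \<in> Od2 n" "\<not> n \<le> N" unfolding Lambda2_Sigma by auto
    then show "?g l = 0" using F_zero l by simp
  qed (auto simp: Lambda2_Sigma)
  also have "\<dots> = (\<Sum>l\<in>Sigma {..N} Od2. ?g l)" by (rule infsum_finite) auto
  also have "\<dots> = (\<Sum>n\<le>N. \<Sum>a\<in>Od2 n. ?g (n, a))" by (subst sum.Sigma) (auto simp: case_prod_beta)
  also have "\<dots> = (\<Sum>n\<le>N. wt2 s n * P2 f n)"
    unfolding P2_def sum_distrib_left by (intro sum.cong refl) (simp add: wt2_def lam_abs2_def)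
  finally show ?thesis .
qed

end




theorem propositionB4:
  fixes s :: real
  assumes "s > 0"
  shows "\<exists>c C. c > 0 \<and> C > 0 \<and>
    (\<forall>f :: Z2 \<Rightarrow> complex. locally_constant2 f \<longrightarrow>
       c * Ns2 s f \<le> Hs_norm2 s f \<and> Hs_norm2 s f \<le> C * Ns2 s f)"
proof -
  define q where "q = (2::real) powr (2 * s)"
  have q1: "q > 1" unfolding q_def using assms by (intro gr_one_powr) auto
  define K1 where "K1 = 1 + 2 / (q - 1)"
  define K2 where "K2 = 1 + q\<^sup>2"
  have K1: "K1 > 0" unfolding K1_def using q1 by (simp add: add_pos_pos)
  have K2: "K2 > 0" unfolding K2_def by (simp add: add_pos_nonneg)
  show ?thesis
  proof (intro exI conjI allI impI)
    show "1 / sqrt (2 * K1) > 0" using K1 by simp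
    show "sqrt K2 > 0" using K2 by simp
    fix f :: "Z2 \<Rightarrow> complex" assume lc: "locally_constant2 f"
    obtain N where dN: "dep2 N f" using uniform_lc[OF lc] by blast
    note W = wt2_props[OF assms]
    note fi = final_ineq[of q "P2 f" "wt2 s" N, OF q1 P2_nonneg W(2) W(3)[folded q_def] W(1) W(4)[folded q_def]]
    let ?L = "\<Sum>m\<le>N. P2 f m"
    let ?G = "\<Sum>k<N. q ^ k * ((\<Sum>m\<in>{k<..N}. P2 f m) + P2 f (Suc k))"
    let ?H = "\<Sum>n\<le>N. wt2 s n * P2 f n"
    have H0: "0 \<le> ?H" using W(2) P2_nonneg by (intro sum_nonneg mult_nonneg_nonneg) (auto intro: order.trans[OF zero_le_one])
    have Ns: "Ns2 s f = sqrt ?L + sqrt ?G"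
      unfolding Ns2_def L2_norm2_def
      using L2_P[OF dN] gagliardo_final[OF dN, of s] L2_eq[OF dN] unfolding q_def by simp
    have Hs: "Hs_norm2 s f = sqrt ?H"
      unfolding Hs_norm2_def using Hs_final[OF dN, of s] by simp
    note ne = norm_equiv[OF fi(3) fi(4) H0 fi(1)[folded K1_def] fi(2)[folded K2_def] K1 K2]
    show "1 / sqrt (2 * K1) * Ns2 s f \<le> Hs_norm2 s f" unfolding Ns Hs using ne(1) .
    show "Hs_norm2 s f \<le> sqrt K2 * Ns2 s f" unfolding Ns Hs using ne(2) .
  qed
qed


end
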